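(* Let $S$ be an atomic and simple relation algebra with finitely many atoms, and let $\# : S\to\mathbb{N}\cup\{\infty\}$ satisfy: $\#\bot=0$; $\#x=1$ for every atom $x$; $\#x+\#y=\#(x\sqcup y)+\#(x\sqcap y)$ for all $x,y\in S$; and $\#\top=(\#1)^2$. Then $S$ is atom-rectangular, and hence representable.
   Context: A Stone relation algebra is a structure $(S,\sqcup,\sqcap,\cdot,\overline{\,\cdot\,},{}^{\smile},\bot,\top,1)$ (write $xy$ for $x\cdot y$, $\overline{x}$ for the pseudocomplement, $x^{\smile}$ for the converse) such that: $(S,\sqcup,\sqcap,\bot,\top)$ is a bounded distributive lattice with order $x\sqsubseteq y\iff x\sqcup y=y$; $x\sqcap y=\bot\iff x\sqsubseteq\overline{y}$; $\overline{x}\sqcup\overline{\overline{x}}=\top$; $\cdot$ is associative with two-sided unit $1$, distributes over $\sqcup$ on both sides, and $\bot$ is a zero of $\cdot$; $x^{\smile\smile}=x$, $(xy)^{\smile}=y^{\smile}x^{\smile}$, $(x\sqcup y)^{\smile}=x^{\smile}\sqcup y^{\smile}$; $\overline{\overline{1}}=1$; $\overline{\overline{xy}}=\overline{\overline{x}}\,\overline{\overline{y}}$; $xy\sqcap z\sqsubseteq x(y\sqcap x^{\smile}z)$. A relation algebra is a Stone relation algebra with $\overline{\overline{x}}=x$ for all $x$; it is representable if it is isomorphic to an algebra of binary relations (on some base set) with the usual relational operations. An atom is an element $x\neq\bot$ such that $\bot\neq y\sqsubseteq x$ implies $y=x$. An element $x$ is a rectangle if $x\top x\sqsubseteq x$ and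 simple if $\top x\top=\top$. $S$ is simple if every element other than $\bot$ is simple; atomic if every $x\neq\bot$ has an atom below it; atom-rectangular if every atom is a rectangle. Arithmetic in $\mathbb{N}\cup\{\infty\}$ has $n+\infty=\infty+n=\infty$ and $\infty^2=\infty$. *)

theory Defs
  imports "HOL-Library.Extended_Nat"
begin

record 'a sra =
  ssup :: "'a \<Rightarrow> 'a \<Rightarrow> 'a"
  sinf :: "'a \<Rightarrow> 'a \<Rightarrow> 'a"
  scomp :: "'a \<Rightarrow> 'a \<Rightarrow> 'a"
  spc :: "'a \<Rightarrow> 'a"
  sconv :: "'a \<Rightarrow> 'a"
  sbot :: 'a
  stop :: 'a
  sone :: 'a

definition sle :: "'a sra \<Rightarrow> 'a \<Rightarrow> 'a \<Rightarrow> bool" where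
  "sle S x y \<longleftrightarrow> ssup S x y = y"

definition stone_relation_algebra :: "'a sra \<Rightarrow> bool" where
  "stone_relation_algebra S \<longleftrightarrow>
    \<comment> \<open>bounded distributive lattice\<close>
    (\<forall>x y z. ssup S (ssup S x y) z = ssup S x (ssup S y z)) \<and>
    (\<forall>x y. ssup S x y = ssup S y x) \<and>
    (\<forall>x. ssup S x x = x) \<and>
    (\<forall>x y z. sinf S (sinf S x y) z = sinf S x (sinf S y z)) \<and>
    (\<forall>x y. sinf S x y = sinf S y x) \<and>
    (\<forall>x. sinf S x x = x) \<and>
    (\<forall>x y. ssup S x (sinf S x y) = x) \<and>
    (\<forall>x y. sinf S x (ssup S x y) = x) \<and>
    (\<forall>x y z. sinf S x (ssup S y z) = ssup S (sinf S x y) (sinf S x z)) \<and>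
    (\<forall>x. sle S (sbot S) x) \<and>
    (\<forall>x. sle S x (stop S)) \<and>
    \<comment> \<open>Stone algebra\<close>
    (\<forall>x y. sinf S x y = sbot S \<longleftrightarrow> sle S x (spc S y)) \<and>
    (\<forall>x. ssup S (spc S x) (spc S (spc S x)) = stop S) \<and>
    \<comment> \<open>monoid with zero, distributing over join\<close>
    (\<forall>x y z. scomp S (scomp S x y) z = scomp S x (scomp S y z)) \<and>
    (\<forall>x. scomp S (sone S) x = x) \<and>
    (\<forall>x. scomp S x (sone S) = x) \<and>
    (\<forall>x y z. scomp S x (ssup S y z) = ssup S (scomp S x y) (scomp S x z)) \<and>
    (\<forall>x y z. scomp S (ssup S x y) z = ssup S (scomp S x z) (scomp S y z)) \<and>
    (\<forall>x. scomp S (sbot S) x = sbot S) \<and>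
    (\<forall>x. scomp S x (sbot S) = sbot S) \<and>
    \<comment> \<open>converse\<close>
    (\<forall>x. sconv S (sconv S x) = x) \<and>
    (\<forall>x y. sconv S (scomp S x y) = scomp S (sconv S y) (sconv S x)) \<and>
    (\<forall>x y. sconv S (ssup S x y) = ssup S (sconv S x) (sconv S y)) \<and>
    \<comment> \<open>remaining axioms\<close>
    spc S (spc S (sone S)) = sone S \<and>
    (\<forall>x y. spc S (spc S (scomp S x y)) = scomp S (spc S (spc S x)) (spc S (spc S y))) \<and>
    (\<forall>x y z. sle S (sinf S (scomp S x y) z) (scomp S x (sinf S y (scomp S (sconv S x) z))))"

definition relation_algebra :: "'a sra \<Rightarrow> bool" where
  "relation_algebra S \<longleftrightarrow> stone_relation_algebra S \<and> (\<forall>x. spc S (spc S x) = x)"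

definition is_atom :: "'a sra \<Rightarrow> 'a \<Rightarrow> bool" where
  "is_atom S x \<longleftrightarrow> x \<noteq> sbot S \<and> (\<forall>y. y \<noteq> sbot S \<and> sle S y x \<longrightarrow> y = x)"

definition is_rectangle :: "'a sra \<Rightarrow> 'a \<Rightarrow> bool" where
  "is_rectangle S x \<longleftrightarrow> sle S (scomp S (scomp S x (stop S)) x) x"

definition is_simple_elem :: "'a sra \<Rightarrow> 'a \<Rightarrow> bool" where
  "is_simple_elem S x \<longleftrightarrow> scomp S (scomp S (stop S) x) (stop S) = stop S"

definition simple_algebra :: "'a sra \<Rightarrow> bool" where
  "simple_algebra S \<longleftrightarrow> (\<forall>x. x \<noteq> sbot S \<longrightarrow> is_simple_elem S x)"

definition atomic_algebra :: "'a sra \<Rightarrow> bool" where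
  "atomic_algebra S \<longleftrightarrow> (\<forall>x. x \<noteq> sbot S \<longrightarrow> (\<exists>a. is_atom S a \<and> sle S a x))"

definition atom_rectangular :: "'a sra \<Rightarrow> bool" where
  "atom_rectangular S \<longleftrightarrow> (\<forall>a. is_atom S a \<longrightarrow> is_rectangle S a)"

text \<open>Representable: embeddable (injective homomorphism) into the algebra of
  binary relations on a base set B with unit/top an equivalence relation E on B
  (the usual notion; for simple algebras E can be taken to be B \<times> B).\<close>

definition representable :: "'a sra \<Rightarrow> bool" where
  "representable S \<longleftrightarrow> (\<exists>(B::'a set) (E::('a \<times> 'a) set) (h::'a \<Rightarrow> ('a \<times> 'a) set).
     equiv B E \<and> inj h \<and>
     h (stop S) = E \<and> h (sbot S) = {} \<and> h (sone S) = Id_on B \<and>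
     (\<forall>x y. h (ssup S x y) = h x \<union> h y) \<and>
     (\<forall>x y. h (sinf S x y) = h x \<inter> h y) \<and>
     (\<forall>x y. h (scomp S x y) = h x O h y) \<and>
     (\<forall>x. h (spc S x) = E - h x) \<and>
     (\<forall>x. h (sconv S x) = (h x)\<inverse>))"

end

theory Submission
  imports Defs
begin

locale RA =
  fixes S :: "'a sra"
  assumes ra: "relation_algebra S"
begin

abbreviation J (infixl "\<squnion>" 65) where "x \<squnion> y \<equiv> ssup S x y"
abbreviation M (infixl "\<sqinter>" 70) where "x \<sqinter> y \<equiv> sinf S x y"
abbreviation C (infixl "\<cdot>" 75) where "x \<cdot> y \<equiv> scomp S x y"
abbreviation N where "N x \<equiv> spc S x"
abbreviation V where "V x \<equiv> sconv S x"
abbreviation Z where "Z \<equiv> sbot S"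
abbreviation T where "T \<equiv> stop S"
abbreviation I where "I \<equiv> sone S"
abbreviation L (infix "\<preceq>" 50) where "x \<preceq> y \<equiv> sle S x y"

lemma ax:
  "\<And>x y z. (x \<squnion> y) \<squnion> z = x \<squnion> (y \<squnion> z)"
  "\<And>x y. x \<squnion> y = y \<squnion> x"
  "\<And>x. x \<squnion> x = x"
  "\<And>x y z. (x \<sqinter> y) \<sqinter> z = x \<sqinter> (y \<sqinter> z)"
  "\<And>x y. x \<sqinter> y = y \<sqinter> x"
  "\<And>x. x \<sqinter> x = x"
  "\<And>x y. x \<squnion> (x \<sqinter> y) = x"
  "\<And>x y. x \<sqinter> (x \<squnion> y) = x"
  "\<And>x y z. x \<sqinter> (y \<squnion> z) = (x \<sqinter> y) \<squnion> (x \<sqinter> z)"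
  "\<And>x. Z \<preceq> x"
  "\<And>x. x \<preceq> T"
  "\<And>x y. x \<sqinter> y = Z \<longleftrightarrow> x \<preceq> N y"
  "\<And>x. N x \<squnion> N (N x) = T"
  "\<And>x y z. (x \<cdot> y) \<cdot> z = x \<cdot> (y \<cdot> z)"
  "\<And>x. I \<cdot> x = x"
  "\<And>x. x \<cdot> I = x"
  "\<And>x y z. x \<cdot> (y \<squnion> z) = (x \<cdot> y) \<squnion> (x \<cdot> z)"
  "\<And>x y z. (x \<squnion> y) \<cdot> z = (x \<cdot> z) \<squnion> (y \<cdot> z)"
  "\<And>x. Z \<cdot> x = Z"
  "\<And>x. x \<cdot> Z = Z"
  "\<And>x. V (V x) = x"
  "\<And>x y. V (x \<cdot> y) = V y \<cdot> V x"
  "\<And>x y. V (x \<squnion> y) = V x \<squnion> V y"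
  "\<And>x y z. (x \<cdot> y) \<sqinter> z \<preceq> x \<cdot> (y \<sqinter> (V x \<cdot> z))"
  "\<And>x. N (N x) = x"
  using ra unfolding relation_algebra_def stone_relation_algebra_def by auto

lemma le_def': "x \<preceq> y \<longleftrightarrow> x \<squnion> y = y" by (simp add: sle_def)

sublocale B: boolean_algebra "\<lambda>x y. x \<sqinter> N y" N "(\<sqinter>)" "(\<preceq>)" "\<lambda>x y. x \<preceq> y \<and> x \<noteq> y" "(\<squnion>)" Z T
proof unfold_locales
  fix x y z
  show "(x \<preceq> y \<and> x \<noteq> y) = (x \<preceq> y \<and> \<not> y \<preceq> x)" by (metis le_def' ax(2))
  show "x \<preceq> x" by (simp add: le_def' ax)
  show "x \<preceq> y \<Longrightarrow> y \<preceq> z \<Longrightarrow> x \<preceq> z" by (metis le_def' ax(1))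
  show "x \<preceq> y \<Longrightarrow> y \<preceq> x \<Longrightarrow> x = y" by (metis le_def' ax(2))
  show "x \<sqinter> y \<preceq> x" by (metis le_def' ax(2,5,7))
  show "x \<sqinter> y \<preceq> y" by (metis le_def' ax(2,5,7))
  show "x \<preceq> y \<Longrightarrow> x \<preceq> z \<Longrightarrow> x \<preceq> y \<sqinter> z" by (metis le_def' ax(2,4,5,7,8))
  show "x \<preceq> x \<squnion> y" by (metis le_def' ax(1,3))
  show "y \<preceq> x \<squnion> y" by (metis le_def' ax(1,2,3))
  show "y \<preceq> x \<Longrightarrow> z \<preceq> x \<Longrightarrow> y \<squnion> z \<preceq> x" by (metis le_def' ax(1))
  have "(x \<squnion> y) \<sqinter> (x \<squnion> z) = ((x \<squnion> y) \<sqinter> x) \<squnion> ((x \<squnion> y) \<sqinter> z)" by (rule ax(9))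
  also have "\<dots> = x \<squnion> (z \<sqinter> x \<squnion> z \<sqinter> y)" by (metis ax(5,8,9))
  also have "\<dots> = x \<squnion> y \<sqinter> z" by (metis ax(1,5,7))
  finally show "x \<squnion> y \<sqinter> z = (x \<squnion> y) \<sqinter> (x \<squnion> z)" by simp
  show "Z \<preceq> x" by (rule ax)
  show "x \<preceq> T" by (rule ax)
  show "x \<sqinter> N x = Z" by (simp add: ax(12) ax(25) le_def' ax(3))
  show "x \<squnion> N x = T" by (metis ax(13,25,2))
  show "x \<sqinter> N y = x \<sqinter> N y" by simp
qed

lemma mono_l: "x \<preceq> y \<Longrightarrow> z \<cdot> x \<preceq> z \<cdot> y" by (metis le_def' ax(17))
lemma mono_r: "x \<preceq> y \<Longrightarrow> x \<cdot> z \<preceq> y \<cdot> z" by (metis le_def' ax(18))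
lemma mono: "x \<preceq> y \<Longrightarrow> u \<preceq> v \<Longrightarrow> x \<cdot> u \<preceq> y \<cdot> v"
  by (meson B.order.trans mono_l mono_r)
lemma conv_mono: "x \<preceq> y \<Longrightarrow> V x \<preceq> V y" by (metis le_def' ax(23))
lemma conv_iff: "V x \<preceq> y \<longleftrightarrow> x \<preceq> V y" by (metis conv_mono ax(21))
lemma conv_T: "V T = T" by (metis B.order.antisym ax(11) conv_iff)
lemma conv_Z: "V Z = Z" by (metis B.order.antisym ax(10) conv_iff)
lemma conv_I: "V I = I"
proof -
  have "V I = V I \<cdot> V (V I)" by (simp only: ax(21,16))
  also have "\<dots> = V (V I \<cdot> I)" by (simp only: ax(22))
  also have "\<dots> = I" by (simp only: ax(21,16))
  finally show ?thesis .
qed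
lemma conv_inf: "V (x \<sqinter> y) = V x \<sqinter> V y"
proof (rule B.order.antisym)
  show "V (x \<sqinter> y) \<preceq> V x \<sqinter> V y" by (simp add: conv_mono)
  have "V (V x \<sqinter> V y) \<preceq> x \<sqinter> y" by (metis B.inf.bounded_iff B.inf_le1 B.inf_le2 ax(21) conv_mono)
  thus "V x \<sqinter> V y \<preceq> V (x \<sqinter> y)" by (metis conv_iff)
qed
lemma mod_r: "y \<cdot> x \<sqinter> z \<preceq> (y \<sqinter> z \<cdot> V x) \<cdot> x"
proof -
  have "V (y \<cdot> x \<sqinter> z) = V x \<cdot> V y \<sqinter> V z" by (simp add: conv_inf ax)
  also have "\<dots> \<preceq> V x \<cdot> (V y \<sqinter> V (V x) \<cdot> V z)" by (rule ax(24))
  also have "\<dots> = V ((y \<sqinter> z \<cdot> V x) \<cdot> x)" by (simp add: conv_inf ax)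
  finally show ?thesis by (metis conv_iff ax(21))
qed
lemma vv: "x \<preceq> x \<cdot> V x \<cdot> x"
proof -
  have "x = x \<cdot> I \<sqinter> x" by (simp add: ax)
  also have "\<dots> \<preceq> x \<cdot> (I \<sqinter> V x \<cdot> x)" by (rule ax(24))
  also have "\<dots> \<preceq> x \<cdot> (V x \<cdot> x)" by (rule mono_l) simp
  finally show ?thesis by (simp add: ax)
qed
lemma subid_conv: "p \<preceq> I \<Longrightarrow> V p = p"
proof -
  assume p: "p \<preceq> I"
  hence vp: "V p \<preceq> I" by (metis conv_I conv_mono)
  have "p \<preceq> p \<cdot> V p \<cdot> p" by (rule vv)
  also have "\<dots> \<preceq> I \<cdot> V p \<cdot> I" using p by (meson mono B.order.refl)
  finally have 1: "p \<preceq> V p" by (simp add: ax)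
  hence "V p \<preceq> V (V p)" by (rule conv_mono)
  with 1 show ?thesis by (simp add: ax B.order.antisym)
qed
lemma subid_mult: "p \<preceq> I \<Longrightarrow> q \<preceq> I \<Longrightarrow> p \<cdot> q \<preceq> p \<sqinter> q"
  by (metis B.le_inf_iff B.order.refl ax(15,16) mono)
lemma subid_idem: "p \<preceq> I \<Longrightarrow> p \<cdot> p = p"
proof -
  assume p: "p \<preceq> I"
  have "p \<preceq> p \<cdot> V p \<cdot> p" by (rule vv)
  also have "\<dots> = p \<cdot> p \<cdot> p" using p by (simp add: subid_conv)
  also have "\<dots> \<preceq> p \<cdot> p \<cdot> I" using p by (meson mono B.order.refl)
  finally have "p \<preceq> p \<cdot> p" by (simp add: ax)
  moreover have "p \<cdot> p \<preceq> p" using subid_mult[OF p p] by simp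
  ultimately show ?thesis by (simp add: B.order.antisym)
qed
lemma dom_le: "x \<preceq> (I \<sqinter> x \<cdot> V x) \<cdot> x"
  using mod_r[of I x x] by (simp add: ax)
lemma cod_le: "x \<preceq> x \<cdot> (I \<sqinter> V x \<cdot> x)"
  using ax(24)[of x I x] by (simp add: ax)
lemma le_Z: "x \<preceq> Z \<longleftrightarrow> x = Z" by (simp add: B.bot_unique)
lemma cod_nz: assumes "q \<preceq> V s \<cdot> s" "q \<noteq> Z" shows "s \<cdot> q \<noteq> Z"
proof
  assume sq: "s \<cdot> q = Z"
  have "q = V s \<cdot> s \<sqinter> q" using assms(1) by (simp add: B.inf.absorb2)
  also have "\<dots> \<preceq> V s \<cdot> (s \<sqinter> V (V s) \<cdot> q)" by (rule ax(24))
  also have "\<dots> = Z" using sq by (simp add: ax)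
  finally show False using assms(2) le_Z by simp
qed
lemma dom_nz: assumes "q \<preceq> t \<cdot> V t" "q \<noteq> Z" shows "q \<cdot> t \<noteq> Z"
proof
  assume sq: "q \<cdot> t = Z"
  have "q = t \<cdot> V t \<sqinter> q" using assms(1) by (simp add: B.inf.absorb2)
  also have "\<dots> \<preceq> (t \<sqinter> q \<cdot> V (V t)) \<cdot> V t" by (rule mod_r)
  also have "\<dots> = Z" using sq by (simp add: ax)
  finally show False using assms(2) le_Z by simp
qed

lemma atom_cases: "is_atom S a \<Longrightarrow> a \<sqinter> x = Z \<or> a \<preceq> x"
  unfolding is_atom_def by (metis B.inf_le1 B.inf_le2)
lemma atom_below: "is_atom S a \<Longrightarrow> x \<noteq> Z \<Longrightarrow> x \<preceq> a \<Longrightarrow> x = a"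
  unfolding is_atom_def by blast
lemma atom_nz: "is_atom S a \<Longrightarrow> a \<noteq> Z"
  unfolding is_atom_def by blast
lemma atom_N: "is_atom S a \<Longrightarrow> a \<preceq> N x \<longleftrightarrow> \<not> a \<preceq> x"
  by (metis B.inf.absorb1 B.inf.commute atom_cases atom_nz ax(12))
lemma atom_sup: assumes "is_atom S a" shows "a \<preceq> x \<squnion> y \<longleftrightarrow> a \<preceq> x \<or> a \<preceq> y"
proof
  assume a: "a \<preceq> x \<squnion> y"
  show "a \<preceq> x \<or> a \<preceq> y"
  proof (rule disjCI)
    assume "\<not> a \<preceq> y"
    hence ay: "a \<sqinter> y = Z" using atom_cases[OF assms] by blast
    have "a = a \<sqinter> (x \<squnion> y)" using a by (simp add: B.inf.absorb1)
    also have "\<dots> = a \<sqinter> x \<squnion> a \<sqinter> y" by (rule ax(9))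
    also have "\<dots> = a \<sqinter> x" using ay by simp
    finally show "a \<preceq> x" by (metis B.inf.orderI B.inf_le2 B.order.trans) 
  qed
qed (auto intro: B.le_supI1 B.le_supI2)

end

locale RA2 = RA +
  fixes cnt :: "'a \<Rightarrow> enat"
  assumes atomic: "atomic_algebra S" and simple: "simple_algebra S"
    and fin: "finite {x. is_atom S x}"
    and c0: "cnt Z = 0" and c1: "\<And>x. is_atom S x \<Longrightarrow> cnt x = 1"
    and cadd: "\<And>x y. cnt x + cnt y = cnt (x \<squnion> y) + cnt (x \<sqinter> y)"
    and cT: "cnt T = (cnt I)\<^sup>2"
begin

definition At where "At x = {a. is_atom S a \<and> a \<preceq> x}"
definition Bs where "Bs = At I"

lemma atom_ex: "x \<noteq> Z \<Longrightarrow> \<exists>a. is_atom S a \<and> a \<preceq> x"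
  using atomic unfolding atomic_algebra_def by blast

lemma finAt: "finite (At x)"
  using fin by (rule finite_subset[rotated]) (auto simp: At_def)

lemma cnt_at: "cnt x = enat (card (At x))"
proof (induction "card (At x)" arbitrary: x rule: less_induct)
  case less
  show ?case
  proof (cases "x = Z")
    case True
    have "At x = {}" using True atom_nz unfolding At_def by (auto simp: le_Z)
    thus ?thesis using True c0 by (simp add: zero_enat_def)
  next
    case False
    then obtain a where a: "is_atom S a" "a \<preceq> x" using atom_ex by blast
    define y where "y = x \<sqinter> N a"
    have Aty: "At y = At x - {a}"
    proof (rule set_eqI)
      fix b
      show "b \<in> At y \<longleftrightarrow> b \<in> At x - {a}"
        unfolding At_def y_def using atom_N atom_below[of a b] atom_nz[of b] a(1)
        by (auto simp: B.le_inf_iff)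
    qed
    have "a \<in> At x" using a At_def by simp
    hence pos: "card (At x) > 0" using finAt[of x] card_gt_0_iff by blast
    hence lt: "card (At y) < card (At x)" and cy: "card (At x) = card (At y) + 1"
      using Aty finAt[of x] \<open>a \<in> At x\<close> by (simp_all add: card_Diff_singleton)
    have IH: "cnt y = enat (card (At y))" using less lt by blast
    have yx: "y \<squnion> a = x" unfolding y_def
      by (simp add: B.sup_inf_distrib2 B.sup.absorb1 a(2))
    have ya: "y \<sqinter> a = Z" unfolding y_def
      by (simp add: B.inf_assoc)
    have "cnt y + cnt a = cnt x + cnt Z" using cadd[of y a] yx ya by simp
    hence "cnt x = enat (card (At y)) + 1" using IH c0 c1[OF a(1)] by simp
    thus ?thesis using cy by (simp add: one_enat_def)
  qed
qed

lemma AtT: "At T = {a. is_atom S a}" unfolding At_def by (simp add: ax)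

lemma card_eq: "card (At T) = card Bs ^ 2"
proof -
  have "enat (card (At T)) = enat (card Bs) ^ 2" using cT cnt_at[of T] cnt_at[of I] Bs_def by simp
  also have "\<dots> = enat (card Bs ^ 2)" by (metis of_nat_eq_enat of_nat_power)
  finally show ?thesis by simp
qed

lemma simpT: "x \<noteq> Z \<Longrightarrow> T \<cdot> (x \<cdot> T) = T"
  using simple unfolding simple_algebra_def is_simple_elem_def by (simp add: ax(14))

lemma Bs_D: assumes "p \<in> Bs" shows "is_atom S p" "p \<preceq> I" "p \<noteq> Z" "V p = p" "p \<cdot> p = p"
  using assms atom_nz subid_conv subid_idem unfolding Bs_def At_def by auto

lemma pq_Z: assumes "p \<in> Bs" "q \<in> Bs" "p \<noteq> q" shows "p \<cdot> q = Z"
proof -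
  have "p \<sqinter> q = Z" using atom_cases[OF Bs_D(1)[OF assms(1)], of q] atom_below[OF Bs_D(1)[OF assms(2)], of p]
    Bs_D(3)[OF assms(1)] assms(3) by blast
  thus ?thesis using subid_mult[OF Bs_D(2)[OF assms(1)] Bs_D(2)[OF assms(2)]] le_Z by simp
qed

lemma pTq_nz: assumes "p \<in> Bs" "q \<in> Bs" shows "p \<cdot> T \<cdot> q \<noteq> Z"
proof
  assume z: "p \<cdot> T \<cdot> q = Z"
  have s1: "T \<cdot> (p \<cdot> T) = T" and s2: "T \<cdot> (q \<cdot> T) = T" using simpT Bs_D(3) assms by auto
  have "T = T \<cdot> (p \<cdot> (T \<cdot> (q \<cdot> T)))" by (simp add: s1 s2)
  also have "\<dots> = T \<cdot> ((p \<cdot> T \<cdot> q) \<cdot> T)" by (simp only: ax(14))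
  also have "\<dots> = Z" using z by (simp add: ax)
  finally have "p \<preceq> Z" using ax(11)[of p] by simp
  thus False using Bs_D(3)[OF assms(1)] le_Z by simp
qed

lemma atom_in_rect: assumes a: "is_atom S a" shows "\<exists>p q. p \<in> Bs \<and> q \<in> Bs \<and> a \<preceq> p \<cdot> T \<cdot> q"
proof -
  have anz: "a \<noteq> Z" using atom_nz a by simp
  define d where "d = I \<sqinter> a \<cdot> V a"
  have "a \<preceq> d \<cdot> a" unfolding d_def by (rule dom_le)
  hence "d \<noteq> Z" using anz le_Z ax(19) by metis
  then obtain p where p: "is_atom S p" "p \<preceq> d" using atom_ex by blast
  have pB: "p \<in> Bs" using p unfolding Bs_def At_def d_def by (auto simp: B.le_inf_iff)
  have "p \<cdot> a \<noteq> Z" using dom_nz[of p a] p atom_nz unfolding d_def by (auto simp: B.le_inf_iff)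
  moreover have "p \<cdot> a \<preceq> a" using mono_r[OF Bs_D(2)[OF pB], of a] by (simp add: ax)
  ultimately have pa: "p \<cdot> a = a" using atom_below a by blast
  define e where "e = I \<sqinter> V a \<cdot> a"
  have "a \<preceq> a \<cdot> e" unfolding e_def by (rule cod_le)
  hence "e \<noteq> Z" using anz le_Z ax(20) by metis
  then obtain q where q: "is_atom S q" "q \<preceq> e" using atom_ex by blast
  have qB: "q \<in> Bs" using q unfolding Bs_def At_def e_def by (auto simp: B.le_inf_iff)
  have "a \<cdot> q \<noteq> Z" using cod_nz[of q a] q atom_nz unfolding e_def by (auto simp: B.le_inf_iff)
  moreover have "a \<cdot> q \<preceq> a" using mono_l[OF Bs_D(2)[OF qB], of a] by (simp add: ax)
  ultimately have aq: "a \<cdot> q = a" using atom_below a by blast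
  have "a = p \<cdot> a \<cdot> q" using pa aq by simp
  also have "\<dots> \<preceq> p \<cdot> T \<cdot> q" by (intro mono B.order.refl ax(11))
  finally show ?thesis using pB qB by blast
qed

lemma disj: assumes "p \<in> Bs" "q \<in> Bs" "p' \<in> Bs" "q' \<in> Bs" "(p, q) \<noteq> (p', q')"
  shows "p \<cdot> T \<cdot> q \<sqinter> p' \<cdot> T \<cdot> q' = Z"
proof (cases "p = p'")
  case False
  have "p \<cdot> (T \<cdot> q) \<sqinter> p' \<cdot> T \<cdot> q' \<preceq> p \<cdot> (T \<cdot> q \<sqinter> V p \<cdot> (p' \<cdot> T \<cdot> q'))" by (rule ax(24))
  also have "V p \<cdot> (p' \<cdot> T \<cdot> q') = (p \<cdot> p') \<cdot> T \<cdot> q'" using Bs_D(4)[OF assms(1)]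
    by (simp add: ax)
  also have "\<dots> = Z" using pq_Z[OF assms(1,3) False] by (simp add: ax)
  finally show ?thesis by (simp add: ax le_Z)
next
  case True
  hence F: "q' \<noteq> q" using assms(5) by auto
  have "p \<cdot> T \<cdot> q \<sqinter> p' \<cdot> T \<cdot> q' \<preceq> (p \<cdot> T \<sqinter> (p' \<cdot> T \<cdot> q') \<cdot> V q) \<cdot> q" by (rule mod_r)
  also have "(p' \<cdot> T \<cdot> q') \<cdot> V q = p' \<cdot> T \<cdot> (q' \<cdot> q)" using Bs_D(4)[OF assms(2)]
    by (simp add: ax)
  also have "\<dots> = Z" using pq_Z[OF assms(4,2) F] by (simp add: ax)
  finally show ?thesis by (simp add: ax le_Z)
qed

definition g where "g pq = (SOME a. is_atom S a \<and> a \<preceq> fst pq \<cdot> T \<cdot> snd pq)"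

lemma g_prop: assumes "p \<in> Bs" "q \<in> Bs" shows "is_atom S (g (p,q)) \<and> g (p,q) \<preceq> p \<cdot> T \<cdot> q"
  unfolding g_def using someI_ex[OF atom_ex[OF pTq_nz[OF assms]]] by simp

lemma both_Z: "is_atom S a \<Longrightarrow> a \<preceq> x \<Longrightarrow> a \<preceq> y \<Longrightarrow> x \<sqinter> y = Z \<Longrightarrow> False"
proof -
  assume "is_atom S a" "a \<preceq> x" "a \<preceq> y" "x \<sqinter> y = Z"
  hence "a \<preceq> x \<sqinter> y" using B.le_inf_iff by blast
  hence "a \<preceq> Z" using \<open>x \<sqinter> y = Z\<close> by simp
  thus False using atom_nz \<open>is_atom S a\<close> le_Z by simp
qed

lemma g_inj: "inj_on g (Bs \<times> Bs)"
proof (rule inj_onI)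
  fix x y assume x: "x \<in> Bs \<times> Bs" and y: "y \<in> Bs \<times> Bs" and e: "g x = g y"
  obtain p q p' q' where xy: "x = (p,q)" "y = (p',q')" by (cases x, cases y) auto
  show "x = y"
  proof (rule ccontr)
    assume "x \<noteq> y"
    hence ne: "(p,q) \<noteq> (p',q')" using xy by simp
    have B4: "p \<in> Bs" "q \<in> Bs" "p' \<in> Bs" "q' \<in> Bs" using x y xy by auto
    have d: "p \<cdot> T \<cdot> q \<sqinter> p' \<cdot> T \<cdot> q' = Z" using disj[OF B4 ne] .
    have g1: "is_atom S (g (p,q))" "g (p,q) \<preceq> p \<cdot> T \<cdot> q" using g_prop[OF B4(1,2)] by auto
    have g2: "g (p,q) \<preceq> p' \<cdot> T \<cdot> q'" using g_prop[OF B4(3,4)] e xy by simp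
    show False using both_Z[OF g1 g2 d] .
  qed
qed

lemma g_onto: "g ` (Bs \<times> Bs) = At T"
proof (rule card_subset_eq)
  show "finite (At T)" by (rule finAt)
  show "g ` (Bs \<times> Bs) \<subseteq> At T" using g_prop unfolding AtT by auto
  have "finite Bs" unfolding Bs_def by (rule finAt)
  thus "card (g ` (Bs \<times> Bs)) = card (At T)"
    using card_image[OF g_inj] card_eq by (simp add: card_cartesian_product power2_eq_square)
qed

lemma pTq_atom: assumes "p \<in> Bs" "q \<in> Bs" shows "is_atom S (p \<cdot> T \<cdot> q)"
proof -
  have uniq: "b = g (p,q)" if b: "is_atom S b" "b \<preceq> p \<cdot> T \<cdot> q" for b
  proof -
    have "b \<in> g ` (Bs \<times> Bs)" using g_onto b AtT by auto
    then obtain p' q' where pq': "p' \<in> Bs" "q' \<in> Bs" "b = g (p',q')" by auto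
    have "(p',q') = (p,q)"
    proof (rule ccontr)
      assume "(p',q') \<noteq> (p,q)"
      from disj[OF pq'(1,2) assms this] have d: "p' \<cdot> T \<cdot> q' \<sqinter> p \<cdot> T \<cdot> q = Z" .
      have "b \<preceq> p' \<cdot> T \<cdot> q'" using g_prop[OF pq'(1,2)] pq'(3) by simp
      from both_Z[OF b(1) this b(2) d] show False .
    qed
    thus ?thesis using pq' by simp
  qed
  show ?thesis unfolding is_atom_def
  proof (intro conjI allI impI)
    show "p \<cdot> T \<cdot> q \<noteq> Z" using pTq_nz assms by simp
    fix y assume y: "y \<noteq> Z \<and> y \<preceq> p \<cdot> T \<cdot> q"
    show "y = p \<cdot> T \<cdot> q"
    proof (rule B.order.antisym)
      show "y \<preceq> p \<cdot> T \<cdot> q" using y by simp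
      show "p \<cdot> T \<cdot> q \<preceq> y"
      proof (rule ccontr)
        assume "\<not> p \<cdot> T \<cdot> q \<preceq> y"
        hence "p \<cdot> T \<cdot> q \<sqinter> N y \<noteq> Z" using ax(12)[of "p \<cdot> T \<cdot> q" "N y"] by (simp add: ax(25))
        then obtain c where c: "is_atom S c" "c \<preceq> p \<cdot> T \<cdot> q \<sqinter> N y" using atom_ex by blast
        obtain b where b: "is_atom S b" "b \<preceq> y" using atom_ex y by blast
        have "b \<preceq> p \<cdot> T \<cdot> q" using b y B.order.trans by blast
        have "c \<preceq> p \<cdot> T \<cdot> q" "c \<preceq> N y" using c(2) B.le_inf_iff by blast+
        hence "b = c" using uniq[OF b(1) \<open>b \<preceq> p \<cdot> T \<cdot> q\<close>] uniq[OF c(1)] by simp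
        thus False using b \<open>c \<preceq> N y\<close> atom_N by simp
      qed
    qed
  qed
qed


lemma atom_eq_rect: assumes a: "is_atom S a" shows "\<exists>p q. p \<in> Bs \<and> q \<in> Bs \<and> a = p \<cdot> T \<cdot> q"
proof -
  obtain p q where pq: "p \<in> Bs" "q \<in> Bs" "a \<preceq> p \<cdot> T \<cdot> q" using atom_in_rect[OF a] by blast
  have "a = p \<cdot> T \<cdot> q" using atom_below[OF pTq_atom[OF pq(1,2)] atom_nz[OF a] pq(3)] .
  thus ?thesis using pq by blast
qed

lemma atom_rect: assumes a: "is_atom S a" shows "is_rectangle S a"
proof -
  obtain p q where pq: "p \<in> Bs" "q \<in> Bs" "a = p \<cdot> T \<cdot> q" using atom_eq_rect[OF a] by blast
  have "a \<cdot> T \<cdot> a = p \<cdot> (T \<cdot> q \<cdot> T \<cdot> p \<cdot> T) \<cdot> q" using pq(3) by (simp only: ax(14))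
  also have "\<dots> \<preceq> p \<cdot> T \<cdot> q" by (intro mono B.order.refl ax(11))
  finally show ?thesis unfolding is_rectangle_def using pq(3) by simp
qed

lemma idem2: "p \<in> Bs \<Longrightarrow> p \<cdot> (p \<cdot> z) = p \<cdot> z"
  by (metis Bs_D(5) ax(14))

definition h where "h x = {(p,q). p \<in> Bs \<and> q \<in> Bs \<and> p \<cdot> T \<cdot> q \<preceq> x}"

lemma h_T: "h T = Bs \<times> Bs" unfolding h_def by (auto simp: ax(11))
lemma h_Z: "h Z = {}" unfolding h_def using pTq_nz le_Z by auto
lemma h_sup: "h (x \<squnion> y) = h x \<union> h y" unfolding h_def using atom_sup[OF pTq_atom] by auto
lemma h_inf: "h (x \<sqinter> y) = h x \<inter> h y" unfolding h_def using B.le_inf_iff by auto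
lemma h_pc: "h (N x) = Bs \<times> Bs - h x" unfolding h_def using atom_N[OF pTq_atom] by auto

lemma conv_rect: "p \<in> Bs \<Longrightarrow> q \<in> Bs \<Longrightarrow> V (p \<cdot> T \<cdot> q) = q \<cdot> T \<cdot> p"
  using Bs_D(4) by (simp add: ax(22) conv_T ax(14))

lemma h_conv: "h (V x) = (h x)\<inverse>"
proof -
  have "p \<cdot> T \<cdot> q \<preceq> V x \<longleftrightarrow> q \<cdot> T \<cdot> p \<preceq> x" if "p \<in> Bs" "q \<in> Bs" for p q
    using conv_iff[of "p \<cdot> T \<cdot> q" x] conv_rect[OF that] by (metis ax(21))
  thus ?thesis unfolding h_def by auto
qed

lemma h_I: "h I = Id_on Bs"
proof -
  have 1: "p \<cdot> T \<cdot> p \<preceq> I" if p: "p \<in> Bs" for p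
  proof -
    have "p = p \<cdot> p \<cdot> p" using Bs_D(5)[OF p] by simp
    also have "\<dots> \<preceq> p \<cdot> T \<cdot> p" by (intro mono B.order.refl ax(11))
    finally have "p = p \<cdot> T \<cdot> p" using atom_below[OF pTq_atom[OF p p] Bs_D(3)[OF p]] by simp
    thus ?thesis using Bs_D(2)[OF p] by simp
  qed
  have 2: "p = q" if pq: "p \<in> Bs" "q \<in> Bs" "p \<cdot> T \<cdot> q \<preceq> I" for p q
  proof (rule ccontr)
    assume ne: "p \<noteq> q"
    have "p \<cdot> T \<cdot> q = p \<cdot> (p \<cdot> T \<cdot> q) \<cdot> q" using idem2[OF pq(1)] Bs_D(5)[OF pq(2)] idem2[OF pq(2)] by (simp add: ax(14))
    also have "\<dots> \<preceq> p \<cdot> I \<cdot> q" by (intro mono B.order.refl pq(3))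
    also have "\<dots> = Z" using pq_Z[OF pq(1,2) ne] by (simp add: ax(16))
    finally show False using pTq_nz[OF pq(1,2)] le_Z by simp
  qed
  show ?thesis unfolding h_def using 1 2 by (auto simp: Id_on_def)
qed

lemma h_comp: "h (x \<cdot> y) = h x O h y"
proof (rule set_eqI, rule iffI)
  fix pr assume "pr \<in> h x O h y"
  then obtain p q r where e: "pr = (p,r)" "p \<in> Bs" "q \<in> Bs" "r \<in> Bs" "p \<cdot> T \<cdot> q \<preceq> x" "q \<cdot> T \<cdot> r \<preceq> y"
    unfolding h_def by auto
  have "p \<cdot> T \<cdot> r = p \<cdot> (T \<cdot> (q \<cdot> T)) \<cdot> r" using simpT[OF Bs_D(3)[OF e(3)]] by simp
  also have "\<dots> = (p \<cdot> T \<cdot> q) \<cdot> (q \<cdot> T \<cdot> r)" using Bs_D(5)[OF e(3)] idem2[OF e(3)] by (simp add: ax(14))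
  also have "\<dots> \<preceq> x \<cdot> y" by (intro mono e(5,6))
  finally show "pr \<in> h (x \<cdot> y)" unfolding h_def using e by simp
next
  fix pr assume "pr \<in> h (x \<cdot> y)"
  then obtain p r where e: "pr = (p,r)" "p \<in> Bs" "r \<in> Bs" "p \<cdot> T \<cdot> r \<preceq> x \<cdot> y"
    unfolding h_def by auto
  define s where "s = p \<cdot> x"
  define t where "t = y \<cdot> r"
  have "p \<cdot> T \<cdot> r = p \<cdot> (p \<cdot> T \<cdot> r) \<cdot> r" using idem2[OF e(2)] Bs_D(5)[OF e(3)] idem2[OF e(3)] by (simp add: ax(14))
  also have "\<dots> \<preceq> p \<cdot> (x \<cdot> y) \<cdot> r" by (intro mono B.order.refl e(4))
  also have "\<dots> = s \<cdot> t" unfolding s_def t_def by (simp add: ax(14))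
  finally have "s \<cdot> t \<noteq> Z" using pTq_nz[OF e(2,3)] le_Z B.order.trans by metis
  define ee where "ee = I \<sqinter> V s \<cdot> s"
  define d where "d = I \<sqinter> t \<cdot> V t"
  have "s \<cdot> t \<preceq> (s \<cdot> ee) \<cdot> (d \<cdot> t)" unfolding ee_def d_def by (intro mono cod_le dom_le)
  also have "\<dots> = s \<cdot> (ee \<cdot> d) \<cdot> t" by (simp add: ax(14))
  also have "\<dots> \<preceq> s \<cdot> (ee \<sqinter> d) \<cdot> t" unfolding ee_def d_def by (intro mono B.order.refl subid_mult B.inf_le1)
  finally have "ee \<sqinter> d \<noteq> Z" using \<open>s \<cdot> t \<noteq> Z\<close> le_Z ax(19) ax(20) by metis
  then obtain q where q: "is_atom S q" "q \<preceq> ee \<sqinter> d" using atom_ex by blast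
  have q2: "q \<preceq> I" "q \<preceq> V s \<cdot> s" "q \<preceq> t \<cdot> V t" using q(2) unfolding ee_def d_def by (auto simp: B.le_inf_iff)
  have qB: "q \<in> Bs" using q(1) q2(1) unfolding Bs_def At_def by simp
  have "p \<cdot> x \<cdot> q \<noteq> Z" using cod_nz[OF q2(2) atom_nz[OF q(1)]] unfolding s_def .
  moreover have "p \<cdot> x \<cdot> q \<preceq> p \<cdot> T \<cdot> q" by (intro mono B.order.refl ax(11))
  ultimately have "p \<cdot> x \<cdot> q = p \<cdot> T \<cdot> q" using atom_below[OF pTq_atom[OF e(2) qB]] by blast
  moreover have "p \<cdot> x \<cdot> q \<preceq> I \<cdot> x \<cdot> I" by (intro mono B.order.refl Bs_D(2) e(2) qB)
  ultimately have 1: "p \<cdot> T \<cdot> q \<preceq> x" by (simp add: ax(15,16))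
  have "q \<cdot> y \<cdot> r \<noteq> Z" using dom_nz[OF q2(3) atom_nz[OF q(1)]] unfolding t_def by (simp add: ax(14))
  moreover have "q \<cdot> y \<cdot> r \<preceq> q \<cdot> T \<cdot> r" by (intro mono B.order.refl ax(11))
  ultimately have "q \<cdot> y \<cdot> r = q \<cdot> T \<cdot> r" using atom_below[OF pTq_atom[OF qB e(3)]] by blast
  moreover have "q \<cdot> y \<cdot> r \<preceq> I \<cdot> y \<cdot> I" by (intro mono B.order.refl Bs_D(2) e(3) qB)
  ultimately have 2: "q \<cdot> T \<cdot> r \<preceq> y" by (simp add: ax(15,16))
  show "pr \<in> h x O h y" unfolding h_def using e(1,2,3) qB 1 2 by blast
qed

lemma h_le: assumes "h x = h y" shows "x \<preceq> y"
proof (rule ccontr)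
  assume "\<not> x \<preceq> y"
  hence "x \<sqinter> N y \<noteq> Z" using ax(12)[of x "N y"] by (simp add: ax(25))
  then obtain a where a: "is_atom S a" "a \<preceq> x \<sqinter> N y" using atom_ex by blast
  obtain p q where pq: "p \<in> Bs" "q \<in> Bs" "a = p \<cdot> T \<cdot> q" using atom_eq_rect[OF a(1)] by blast
  have "a \<preceq> x" "a \<preceq> N y" using a(2) B.le_inf_iff by blast+
  hence "(p,q) \<in> h x" unfolding h_def using pq by simp
  hence "a \<preceq> y" using assms pq unfolding h_def by simp
  thus False using atom_N[OF a(1)] \<open>a \<preceq> N y\<close> by simp
qed

lemma h_inj: "inj h"
  by (rule injI) (metis h_le B.order.antisym)

lemma result: "atom_rectangular S \<and> representable S"
proof
  show "atom_rectangular S" unfolding atom_rectangular_def using atom_rect by blast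
  have "equiv Bs (Bs \<times> Bs)" by (auto simp: equiv_def refl_on_def sym_def trans_def)
  thus "representable S" unfolding representable_def
    using h_inj h_T h_Z h_I h_sup h_inf h_comp h_pc h_conv by blast
qed

end
theorem mainTheorem8:
  fixes S :: "'a sra" and cnt :: "'a \<Rightarrow> enat"
  assumes "relation_algebra S"
    and "atomic_algebra S"
    and "simple_algebra S"
    and "finite {x. is_atom S x}"
    and "cnt (sbot S) = 0"
    and "\<And>x. is_atom S x \<Longrightarrow> cnt x = 1"
    and "\<And>x y. cnt x + cnt y = cnt (ssup S x y) + cnt (sinf S x y)"
    and "cnt (stop S) = (cnt (sone S))\<^sup>2"
  shows "atom_rectangular S \<and> representable S"
proof -
  interpret RA2 S cnt
    by (unfold_locales; fact assms)
  show ?thesis by (rule result)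
qed

end
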